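(* Let $d,n\ge1$ and $M=\begin{bmatrix} I_n & 0\\ 0& 0\end{bmatrix}\in\mathbb{R}^{(n+1)\times(n+1)}$. Let $A_0,A_1,\dots$ and $B_0,B_1,\dots$ be matrices in $\mathbb{R}^{d\times d}$ with each $A_i$ symmetric. Given $X_0\in\mathbb{R}^{d\times(n+1)}$ and $Y_0\in\mathbb{R}^{1\times(n+1)}$, define for $i\ge0$ $$X_{i+1}=X_i+\tfrac1nB_iX_iMX_i^\top A_iX_i,\qquad Y_{i+1}=Y_i+\tfrac1nY_iMX_i^\top A_iX_i.$$ Let $c\in\mathbb{R}$, $C=[0,0,\dots,0,c]\in\mathbb{R}^{1\times(n+1)}$, and let $X_i',Y_i'$ be defined by the same recursion started from $X_0'=X_0$, $Y_0'=Y_0+C$. Then for every $i\ge0$, $X_i'=X_i$ and $Y_i'=Y_i+C$. In particular, $X_i$ and the entries $[Y_i]_j$ for $j\neq n+1$ do not depend on $[Y_0]_{n+1}$, and $[Y_i]_{n+1}$ depends additively on $[Y_0]_{n+1}$. *)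

theory Defs
  imports "Jordan_Normal_Form.Matrix"
begin

definition Mmask :: "nat \<Rightarrow> real mat" where
  "Mmask n = four_block_mat (1\<^sub>m n) (0\<^sub>m n 1) (0\<^sub>m 1 n) (0\<^sub>m 1 1)"

fun XY :: "nat \<Rightarrow> (nat \<Rightarrow> real mat) \<Rightarrow> (nat \<Rightarrow> real mat) \<Rightarrow> real mat \<Rightarrow> real mat
            \<Rightarrow> nat \<Rightarrow> real mat \<times> real mat" where
  "XY n A B X0 Y0 0 = (X0, Y0)"
| "XY n A B X0 Y0 (Suc i) =
     (let (X, Y) = XY n A B X0 Y0 i in
       (X + (1 / real n) \<cdot>\<^sub>m (B i * X * Mmask n * transpose_mat X * A i * X),
        Y + (1 / real n) \<cdot>\<^sub>m (Y * Mmask n * transpose_mat X * A i * X)))"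

end

theory Submission
  imports Defs
begin

lemma Mmask_carrier: "Mmask n \<in> carrier_mat (n+1) (n+1)"
  unfolding Mmask_def by (rule four_block_carrier_mat) auto

lemma Mmask_idx: "i < n+1 \<Longrightarrow> j < n+1 \<Longrightarrow> Mmask n $$ (i,j) = (if i = j \<and> i < n then 1 else 0)"
  unfolding Mmask_def by (auto simp: four_block_mat_def)

lemma CM_zero:
  "mat 1 (n + 1) (\<lambda>(r, j). if j = n then c else 0) * Mmask n = 0\<^sub>m 1 (n+1)"
proof (rule eq_matI)
  fix i j assume ij: "i < dim_row (0\<^sub>m 1 (n + 1))" "j < dim_col (0\<^sub>m 1 (n + 1))"
  have "(\<Sum>k = 0..<n+1. (if k = n then c else 0) * Mmask n $$ (k, j)) = 0"
    using ij by (intro sum.neutral) (auto simp: Mmask_idx)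
  then show "(mat 1 (n + 1) (\<lambda>(r, j). if j = n then c else 0) * Mmask n) $$ (i, j) = 0\<^sub>m 1 (n + 1) $$ (i, j)"
    using ij Mmask_carrier[of n]
    by (auto simp: scalar_prod_def row_def col_def)
qed (use Mmask_carrier[of n] in auto)

theorem lemma6:
  fixes d n :: nat and A B :: "nat \<Rightarrow> real mat" and X0 Y0 :: "real mat" and c :: real
  assumes "d \<ge> 1" and "n \<ge> 1"
    and "\<And>i. A i \<in> carrier_mat d d" and "\<And>i. B i \<in> carrier_mat d d"
    and "\<And>i. transpose_mat (A i) = A i"
    and "X0 \<in> carrier_mat d (n + 1)" and "Y0 \<in> carrier_mat 1 (n + 1)"
  defines "C \<equiv> mat 1 (n + 1) (\<lambda>(r, j). if j = n then c else 0)"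
  shows "\<forall>i. fst (XY n A B X0 (Y0 + C) i) = fst (XY n A B X0 Y0 i)
            \<and> snd (XY n A B X0 (Y0 + C) i) = snd (XY n A B X0 Y0 i) + C"
proof
  fix i
  have CC: "C \<in> carrier_mat 1 (n+1)" unfolding C_def by auto
  have CM: "C * Mmask n = 0\<^sub>m 1 (n+1)" unfolding C_def by (rule CM_zero)
  have M: "Mmask n \<in> carrier_mat (n+1) (n+1)" by (rule Mmask_carrier)
  have "fst (XY n A B X0 (Y0 + C) i) = fst (XY n A B X0 Y0 i)
            \<and> snd (XY n A B X0 (Y0 + C) i) = snd (XY n A B X0 Y0 i) + C
        \<and> fst (XY n A B X0 Y0 i) \<in> carrier_mat d (n+1)
        \<and> snd (XY n A B X0 Y0 i) \<in> carrier_mat 1 (n+1)"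
  proof (induction i)
    case 0
    then show ?case using assms by simp
  next
    case (Suc i)
    obtain X Y where XY: "XY n A B X0 Y0 i = (X, Y)" by (cases "XY n A B X0 Y0 i")
    with Suc have IH: "XY n A B X0 (Y0 + C) i = (X, Y + C)" "X \<in> carrier_mat d (n+1)"
      "Y \<in> carrier_mat 1 (n+1)"
      by (simp_all add: prod_eq_iff)
    define R where "R = transpose_mat X * A i * X"
    have R: "R \<in> carrier_mat (n+1) (n+1)" unfolding R_def using IH assms(3)[of i] by auto
    have YM: "Y * Mmask n \<in> carrier_mat 1 (n+1)" using IH M by auto
    have e1: "(Y + C) * Mmask n * transpose_mat X * A i * X = Y * Mmask n * R"
    proof -
      have "(Y + C) * Mmask n = Y * Mmask n"
        using add_mult_distrib_mat[OF IH(3) CC M] CM YM by simp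
      moreover have "Y * Mmask n * transpose_mat X * A i * X = Y * Mmask n * R"
    proof -
      have T: "transpose_mat X \<in> carrier_mat (n+1) d" using IH by auto
      have "Y * Mmask n * transpose_mat X * A i * X = Y * Mmask n * (transpose_mat X * A i) * X"
        using assoc_mult_mat[OF YM T assms(3)[of i]] by simp
      also have "\<dots> = Y * Mmask n * (transpose_mat X * A i * X)"
        by (rule assoc_mult_mat[OF YM _ IH(2)]) (use T assms(3)[of i] in auto)
      finally show ?thesis unfolding R_def .
    qed
      ultimately show ?thesis by simp
    qed
    have e2: "Y * Mmask n * transpose_mat X * A i * X = Y * Mmask n * R"
    proof -
      have T: "transpose_mat X \<in> carrier_mat (n+1) d" using IH by auto
      have "Y * Mmask n * transpose_mat X * A i * X = Y * Mmask n * (transpose_mat X * A i) * X"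
        using assoc_mult_mat[OF YM T assms(3)[of i]] by simp
      also have "\<dots> = Y * Mmask n * (transpose_mat X * A i * X)"
        by (rule assoc_mult_mat[OF YM _ IH(2)]) (use T assms(3)[of i] in auto)
      finally show ?thesis unfolding R_def .
    qed
    have S: "(1 / real n) \<cdot>\<^sub>m (Y * Mmask n * R) \<in> carrier_mat 1 (n+1)" using YM R by auto
    have "Y + C + (1 / real n) \<cdot>\<^sub>m (Y * Mmask n * R) = Y + (1 / real n) \<cdot>\<^sub>m (Y * Mmask n * R) + C"
      using IH(3) CC S by (simp add: assoc_add_mat comm_add_mat[OF CC S])
    moreover have "B i * X * Mmask n * transpose_mat X * A i * X \<in> carrier_mat d (n+1)"
      using IH assms(3,4)[of i] M by auto
    ultimately show ?case using XY IH e1 e2 S by (simp add: Let_def)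
  qed
  then show "fst (XY n A B X0 (Y0 + C) i) = fst (XY n A B X0 Y0 i)
            \<and> snd (XY n A B X0 (Y0 + C) i) = snd (XY n A B X0 Y0 i) + C" by simp
qed

end
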